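(* Let $D$ be an oriented graph and let $P=(u,w_1,\ldots,w_q,v)$ be a directed $(u,v)$-path in $D$ that is not a shortest directed $(u,v)$-path, for some $q\geq 1$, such that $d_D^-(w_i)=d_D^+(w_i)=1$ for every $i\in\{1,\ldots,q\}$. Then any minimum hull set of $D$ in the geodetic convexity contains at least one of the vertices $w_1,\ldots,w_q$.
   Context: An oriented graph is an orientation of a finite simple graph; $d_D^-$ and $d_D^+$ denote in- and out-degree. The geodetic interval function $I_g(u,v)$ is the set of vertices on some shortest directed $(u,v)$-path or some shortest directed $(v,u)$-path. For $S\subseteq V(D)$, $I_g(S)=\bigcup_{u,v\in S}I_g(u,v)$; $C$ is convex if $I_g(C)=C$; the convex hull of $S$ is the smallest convex set containing $S$; a hull set is a set whose convex hull is $V(D)$; a minimum hull set is one of minimum size. *)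

theory Defs
  imports Main
begin

definition oriented_graph :: "'a set \<Rightarrow> ('a \<times> 'a) set \<Rightarrow> bool" where
  "oriented_graph V A \<longleftrightarrow> finite V \<and> A \<subseteq> V \<times> V \<and>
     (\<forall>x y. (x, y) \<in> A \<longrightarrow> x \<noteq> y \<and> (y, x) \<notin> A)"

definition in_degree :: "('a \<times> 'a) set \<Rightarrow> 'a \<Rightarrow> nat" where
  "in_degree A w = card {x. (x, w) \<in> A}"

definition out_degree :: "('a \<times> 'a) set \<Rightarrow> 'a \<Rightarrow> nat" where
  "out_degree A w = card {y. (w, y) \<in> A}"

definition dipath :: "'a set \<Rightarrow> ('a \<times> 'a) set \<Rightarrow> 'a list \<Rightarrow> bool" where
  "dipath V A xs \<longleftrightarrow> xs \<noteq> [] \<and> distinct xs \<and> set xs \<subseteq> V \<and>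
     (\<forall>i. Suc i < length xs \<longrightarrow> (xs ! i, xs ! Suc i) \<in> A)"

definition dipath_from_to :: "'a set \<Rightarrow> ('a \<times> 'a) set \<Rightarrow> 'a \<Rightarrow> 'a \<Rightarrow> 'a list \<Rightarrow> bool" where
  "dipath_from_to V A u v xs \<longleftrightarrow> dipath V A xs \<and> hd xs = u \<and> last xs = v"

definition shortest_dipath :: "'a set \<Rightarrow> ('a \<times> 'a) set \<Rightarrow> 'a \<Rightarrow> 'a \<Rightarrow> 'a list \<Rightarrow> bool" where
  "shortest_dipath V A u v xs \<longleftrightarrow> dipath_from_to V A u v xs \<and>
     (\<forall>ys. dipath_from_to V A u v ys \<longrightarrow> length xs \<le> length ys)"

definition geo_interval :: "'a set \<Rightarrow> ('a \<times> 'a) set \<Rightarrow> 'a \<Rightarrow> 'a \<Rightarrow> 'a set" where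
  "geo_interval V A u v =
     {x. \<exists>xs. (shortest_dipath V A u v xs \<or> shortest_dipath V A v u xs) \<and> x \<in> set xs}"

definition geo_interval_set :: "'a set \<Rightarrow> ('a \<times> 'a) set \<Rightarrow> 'a set \<Rightarrow> 'a set" where
  "geo_interval_set V A S = (\<Union>u\<in>S. \<Union>v\<in>S. geo_interval V A u v)"

definition geo_convex :: "'a set \<Rightarrow> ('a \<times> 'a) set \<Rightarrow> 'a set \<Rightarrow> bool" where
  "geo_convex V A C \<longleftrightarrow> C \<subseteq> V \<and> geo_interval_set V A C = C"

definition geo_hull :: "'a set \<Rightarrow> ('a \<times> 'a) set \<Rightarrow> 'a set \<Rightarrow> 'a set" where
  "geo_hull V A S = \<Inter> {C. geo_convex V A C \<and> S \<subseteq> C}"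

definition hull_set :: "'a set \<Rightarrow> ('a \<times> 'a) set \<Rightarrow> 'a set \<Rightarrow> bool" where
  "hull_set V A S \<longleftrightarrow> S \<subseteq> V \<and> geo_hull V A S = V"

definition min_hull_set :: "'a set \<Rightarrow> ('a \<times> 'a) set \<Rightarrow> 'a set \<Rightarrow> bool" where
  "min_hull_set V A S \<longleftrightarrow> hull_set V A S \<and> (\<forall>T. hull_set V A T \<longrightarrow> card S \<le> card T)"

end

theory Submission
  imports Defs
begin

lemma walk_to_path:
  assumes "successively (\<lambda>a b. (a, b) \<in> A) xs" "xs \<noteq> []" "set xs \<subseteq> V"
  shows "\<exists>ys. dipath_from_to V A (hd xs) (last xs) ys \<and> length ys \<le> length xs"
  using assms
proof (induction "length xs" arbitrary: xs rule: less_induct)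
  case less
  show ?case
  proof (cases "distinct xs")
    case True
    thus ?thesis using less.prems
      by (auto simp: dipath_from_to_def dipath_def successively_conv_nth)
  next
    case False
    then obtain a b c z where xs: "xs = a @ [z] @ b @ [z] @ c"
      using not_distinct_decomp by blast
    let ?xs = "a @ [z] @ c"
    have s: "successively (\<lambda>a b. (a, b) \<in> A) ?xs"
    proof -
      have 1: "successively (\<lambda>a b. (a, b) \<in> A) (a @ [z])"
        using less.prems(1) unfolding xs
        by (metis append_assoc successively_append_iff)
      have 2: "successively (\<lambda>a b. (a, b) \<in> A) (z # c)"
        using less.prems(1) unfolding xs
        by (metis append_Cons append_assoc append_self_conv2 successively_append_iff)
      have "?xs = (a @ [z]) @ c" by simp
      thus ?thesis using 1 2 by (simp only: successively_append_iff) (auto simp: successively_Cons)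
    qed
    have h: "hd ?xs = hd xs" "last ?xs = last xs" unfolding xs by (cases a; cases c; simp)+
    have l: "length ?xs < length xs" unfolding xs by simp
    have "set ?xs \<subseteq> V" using less.prems(3) unfolding xs by auto
    then obtain ys where "dipath_from_to V A (hd ?xs) (last ?xs) ys" "length ys \<le> length ?xs"
      using less.hyps[OF l s] by auto
    thus ?thesis using h l by auto
  qed
qed

lemma uniq_in:
  assumes "in_degree A w = 1" "(a, w) \<in> A" "(b, w) \<in> A" shows "a = b"
  using assms unfolding in_degree_def by (metis card_1_singletonE mem_Collect_eq singletonD)

lemma uniq_out:
  assumes "out_degree A w = 1" "(w, a) \<in> A" "(w, b) \<in> A" shows "a = b"
  using assms unfolding out_degree_def by (metis card_1_singletonE mem_Collect_eq singletonD)

lemma succ_take: "successively P xs \<Longrightarrow> successively P (take n xs)"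
  by (metis append_take_drop_id successively_append_iff)

lemma succ_drop: "successively P xs \<Longrightarrow> successively P (drop n xs)"
  by (metis append_take_drop_id successively_append_iff)

lemma avoid:
  assumes Qp: "dipath_from_to V A u v (u # ws @ [v])"
    and ns: "\<not> shortest_dipath V A u v (u # ws @ [v])"
    and deg: "\<forall>w\<in>set ws. in_degree A w = 1 \<and> out_degree A w = 1"
    and x: "x \<notin> set ws" and y: "y \<notin> set ws"
    and sp: "shortest_dipath V A x y p"
    and wp: "w \<in> set p" and ww: "w \<in> set ws"
  shows False
proof -
  define Q where "Q = u # ws @ [v]"
  define q where "q = length ws"
  have lQ: "length Q = q + 2" unfolding Q_def q_def by simp
  have Qin: "Q ! j \<in> set ws" if j1: "1 \<le> j" and j2: "j \<le> q" for j
  proof -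
    obtain j' where j: "j = Suc j'" using j1 by (cases j) auto
    have "j' < q" using j2 j by simp
    thus ?thesis unfolding Q_def j q_def by (simp add: nth_append)
  qed
  have Q0: "Q ! 0 = u" unfolding Q_def by simp
  have Qe: "Q ! (q + 1) = v" unfolding Q_def q_def by (simp add: nth_append)
  have Qarc: "(Q ! j, Q ! Suc j) \<in> A" if "j \<le> q" for j
    using Qp that unfolding Q_def[symmetric] dipath_from_to_def dipath_def lQ by auto
  have pd: "dipath V A p" "hd p = x" "last p = y"
    using sp unfolding shortest_dipath_def dipath_from_to_def by auto
  have pne: "p \<noteq> []" using pd unfolding dipath_def by auto
  have parc: "(p ! j, p ! Suc j) \<in> A" if "Suc j < length p" for j
    using pd that unfolding dipath_def by auto
  have p0: "p ! 0 = x" using pd pne by (simp add: hd_conv_nth)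
  have pl: "p ! (length p - 1) = y" using pd pne by (simp add: last_conv_nth)
  obtain i where i: "i < length p" "p ! i = w" using wp by (metis in_set_conv_nth)
  obtain k where k: "k < q" "ws ! k = w" using ww unfolding q_def by (metis in_set_conv_nth)
  have Qk: "Q ! (k + 1) = w" using k unfolding Q_def q_def by (simp add: nth_append)
  have bwd: "t \<le> i \<and> p ! (i - t) = Q ! (k + 1 - t)" if "t \<le> k + 1" for t
    using that
  proof (induction t)
    case 0 thus ?case using i Qk by simp
  next
    case (Suc t)
    hence IH: "t \<le> i" "p ! (i - t) = Q ! (k + 1 - t)" by auto
    have "Q ! (k + 1 - t) \<in> set ws" using Suc.prems k by (intro Qin) auto
    hence "i - t \<noteq> 0" using IH p0 x by auto
    hence st: "Suc t \<le> i" using IH by auto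
    have a1: "(p ! (i - Suc t), p ! (i - t)) \<in> A"
      using parc[of "i - Suc t"] st i by (simp add: Suc_diff_Suc)
    have a2: "(Q ! (k - t), Q ! (k + 1 - t)) \<in> A"
      using Qarc[of "k - t"] Suc.prems k by (simp add: Suc_diff_le)
    have "in_degree A (Q ! (k + 1 - t)) = 1" using deg \<open>Q ! (k + 1 - t) \<in> set ws\<close> by auto
    hence "p ! (i - Suc t) = Q ! (k - t)" using uniq_in a1 a2 IH by metis
    thus ?case using st by simp
  qed
  have fwd: "i + t < length p \<and> p ! (i + t) = Q ! (k + 1 + t)" if "t \<le> q - k" for t
    using that
  proof (induction t)
    case 0 thus ?case using i Qk by simp
  next
    case (Suc t)
    hence IH: "i + t < length p" "p ! (i + t) = Q ! (k + 1 + t)" by auto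
    have inw: "Q ! (k + 1 + t) \<in> set ws" using Suc.prems k by (intro Qin) auto
    hence "i + t \<noteq> length p - 1" using IH pl y by auto
    hence st: "Suc (i + t) < length p" using IH by auto
    have a1: "(p ! (i + t), p ! Suc (i + t)) \<in> A" using parc st by simp
    have a2: "(Q ! (k + 1 + t), Q ! Suc (k + 1 + t)) \<in> A"
      using Qarc[of "k + 1 + t"] Suc.prems k by simp
    have "out_degree A (Q ! (k + 1 + t)) = 1" using deg inw by auto
    hence "p ! Suc (i + t) = Q ! Suc (k + 1 + t)" using uniq_out a1 a2 IH by metis
    thus ?case using st by simp
  qed
  define s where "s = i - (k + 1)"
  define e where "e = s + q + 1"
  have ki: "k + 1 \<le> i" using bwd[of "k+1"] by simp
  have ps: "p ! s = u" using bwd[of "k+1"] Q0 unfolding s_def by simp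
  have fe: "i + (q - k) < length p \<and> p ! (i + (q - k)) = Q ! (k + 1 + (q - k))"
    using fwd[of "q - k"] by simp
  have ie: "i + (q - k) = e" unfolding e_def s_def using ki k by simp
  have e1: "k + 1 + (q - k) = q + 1" using k by simp
  have el: "e < length p" and pe: "p ! e = v" using fe ie e1 Qe by auto
  obtain ys where ys: "dipath_from_to V A u v ys" "length ys < length Q"
    using ns Qp unfolding shortest_dipath_def Q_def by (meson not_le)
  have ysd: "ys \<noteq> []" "hd ys = u" "last ys = v" "set ys \<subseteq> V"
    "successively (\<lambda>a b. (a, b) \<in> A) ys"
    using ys(1) unfolding dipath_from_to_def dipath_def successively_conv_nth by auto
  have psucc: "successively (\<lambda>a b. (a, b) \<in> A) p"
    using parc unfolding successively_conv_nth by auto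
  define W where "W = take s p @ ys @ drop (Suc e) p"
  have se: "s < e" unfolding e_def by simp
  have Ws: "successively (\<lambda>a b. (a, b) \<in> A) W"
    unfolding W_def successively_append_iff
  proof (intro conjI)
    show "successively (\<lambda>a b. (a, b) \<in> A) (take s p)" using succ_take psucc by blast
    show "successively (\<lambda>a b. (a, b) \<in> A) (drop (Suc e) p)" using succ_drop psucc by blast
    show "successively (\<lambda>a b. (a, b) \<in> A) ys" by fact
    show "ys = [] \<or> drop (Suc e) p = [] \<or> (last ys, hd (drop (Suc e) p)) \<in> A"
    proof (cases "Suc e < length p")
      case True
      thus ?thesis using ysd pe parc[of e] by (simp add: hd_drop_conv_nth)
    qed simp
    show "take s p = [] \<or> ys @ drop (Suc e) p = [] \<or> (last (take s p), hd (ys @ drop (Suc e) p)) \<in> A"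
    proof (cases s)
      case (Suc s')
      have "s < length p" using se el by simp
      hence "last (take s p) = p ! s'" using Suc by (simp add: last_conv_nth take_Suc_conv_app_nth)
      thus ?thesis using ysd ps parc[of s'] Suc \<open>s < length p\<close> by simp
    qed simp
  qed
  have Wne: "W \<noteq> []" unfolding W_def using ysd by simp
  have Wh: "hd W = x"
  proof (cases s)
    case 0 thus ?thesis unfolding W_def using ysd ps p0 by simp
  next
    case (Suc s')
    thus ?thesis unfolding W_def using pne p0 by (cases p) auto
  qed
  have Wl: "last W = y"
  proof (cases "Suc e < length p")
    case True
    thus ?thesis unfolding W_def using pd by simp
  next
    case False
    hence "e = length p - 1" using el by simp
    thus ?thesis unfolding W_def using ysd pe pl by simp
  qed
  have pV: "set p \<subseteq> V" using pd(1) unfolding dipath_def by simp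
  have WV: "set W \<subseteq> V" unfolding W_def using ysd(4) pV set_take_subset[of s p] set_drop_subset[of "Suc e" p]
    by auto
  have "length W < length p" unfolding W_def using ys(2) lQ el unfolding e_def by simp
  then obtain zs where "dipath_from_to V A x y zs" "length zs < length p"
    using walk_to_path[OF Ws Wne WV] Wh Wl by force
  thus False using sp unfolding shortest_dipath_def by force
qed

theorem proposition4:
  fixes V :: "'a set" and A :: "('a \<times> 'a) set" and u v :: 'a and ws :: "'a list" and S :: "'a set"
  assumes "oriented_graph V A"
    and "dipath_from_to V A u v (u # ws @ [v])"
    and "\<not> shortest_dipath V A u v (u # ws @ [v])"
    and "length ws \<ge> 1"
    and "\<forall>w\<in>set ws. in_degree A w = 1 \<and> out_degree A w = 1"
    and "min_hull_set V A S"
  shows "\<exists>w\<in>set ws. w \<in> S"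
proof (rule ccontr)
  assume nS: "\<not> (\<exists>w\<in>set ws. w \<in> S)"
  define C where "C = V - set ws"
  have SV: "S \<subseteq> V" "geo_hull V A S = V"
    using assms(6) unfolding min_hull_set_def hull_set_def by blast+
  have wsV: "set ws \<subseteq> V" using assms(2) unfolding dipath_from_to_def dipath_def by auto
  have conv: "geo_convex V A C"
    unfolding geo_convex_def
  proof (intro conjI)
    show "C \<subseteq> V" unfolding C_def by auto
    show "geo_interval_set V A C = C"
    proof
      show "geo_interval_set V A C \<subseteq> C"
      proof
        fix z assume "z \<in> geo_interval_set V A C"
        then obtain a b xs where ab: "a \<in> C" "b \<in> C"
          "shortest_dipath V A a b xs \<or> shortest_dipath V A b a xs" "z \<in> set xs"
          unfolding geo_interval_set_def geo_interval_def by (auto simp del: shortest_dipath_def)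
        have "set xs \<subseteq> V" using ab(3) unfolding shortest_dipath_def dipath_from_to_def dipath_def by blast
        hence "z \<in> V" using ab(4) by blast
        moreover have "z \<notin> set ws"
        proof
          assume zw: "z \<in> set ws"
          have an: "a \<notin> set ws" "b \<notin> set ws" using ab(1,2) unfolding C_def by auto
          from ab(3) show False
          proof
            assume "shortest_dipath V A a b xs"
            thus False by (rule avoid[OF assms(2,3,5) an(1) an(2) _ ab(4) zw])
          next
            assume "shortest_dipath V A b a xs"
            thus False by (rule avoid[OF assms(2,3,5) an(2) an(1) _ ab(4) zw])
          qed
        qed
        ultimately show "z \<in> C" unfolding C_def by auto
      qed
      show "C \<subseteq> geo_interval_set V A C"
      proof
        fix z assume z: "z \<in> C"
        have zV: "z \<in> V" using z unfolding C_def by simp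
        have d1: "dipath_from_to V A z z [z]" using zV
          unfolding dipath_from_to_def dipath_def by simp
        have d2: "length [z] \<le> length ys" if "dipath_from_to V A z z ys" for ys
        proof -
          have "ys \<noteq> []" using that unfolding dipath_from_to_def dipath_def by simp
          thus ?thesis by (cases ys) simp_all
        qed
        have "shortest_dipath V A z z [z]" unfolding shortest_dipath_def using d1 d2 by blast
        hence "z \<in> geo_interval V A z z" unfolding geo_interval_def by force
        thus "z \<in> geo_interval_set V A C" using z
          unfolding geo_interval_set_def by blast
      qed
    qed
  qed
  have "S \<subseteq> C" using SV nS unfolding C_def by auto
  hence "geo_hull V A S \<subseteq> C" using conv unfolding geo_hull_def by (intro Inter_lower) simp
  hence VC: "V \<subseteq> C" using SV(2) by simp
  obtain w0 where w0: "w0 \<in> set ws" using assms(4) by (cases ws) auto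
  hence "w0 \<in> C" using VC wsV by blast
  thus False using w0 unfolding C_def by blast
qed

end
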